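(* Consider the Accelerated Preference Optimization (APO) procedure described in the context, run with an arbitrary loss function $\ell$, learning rate $\beta>0$ and extrapolation parameter $\alpha>0$, $\alpha\neq 1$. Suppose that for each iteration $t\in\{0,\dots,T\}$ the normalized extrapolated policy $\pi_{t+1}$, i.e. the normalization of $\hat{\pi}_{t+1}(y|x)\cdot\big(\hat{\pi}_{t+1}(y|x)/\hat{\pi}_{t}(y|x)\big)^{\alpha}$, belongs to the policy class $\Pi$. Then for every $t\in\{0,\dots,T\}$, every $x\in\mathcal{X}$ and $y\in\mathcal{Y}$, $$\hat{\pi}_{t+1}(y|x)=\frac{1}{Z_t(x)}\,\pi_{\mathrm{ref}}(y|x)\,\exp\Bigg(\frac{1}{\beta}\sum_{i=0}^{t}\Big(\frac{1}{1-\alpha}-\frac{\alpha^{t+1-i}}{1-\alpha}\Big)\, r_i(x,y)\Bigg),$$ where $r_i(x,y)=\beta\log\hat{\pi}_{i+1}(y|x)-\beta\log\pi_i(y|x)$ is the reparameterized reward at iteration $i$, and $Z_t(x)=\sum_{y}\pi_{\mathrm{ref}}(y|x)\exp\big(\sum_{i=0}^{t}(1/(1-\alpha)-\alpha^{t+1-i}/(1-\alpha))\, r_i(x,y)/\beta\big)$ is the normalizing constant.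
   Context: Let $\mathcal{X}$ (prompts) and $\mathcal{Y}$ (responses) be finite sets and $\rho$ a distribution on $\mathcal{X}$. A policy is a map $\pi:\mathcal{X}\to\Delta(\mathcal{Y})$; $\Pi$ is a class of policies with full support (so all logarithms below are defined). The APO procedure takes a reference policy $\pi_{\mathrm{ref}}\in\Pi$, $\beta>0$, an extrapolation parameter $\alpha$, a number of iterations $T$, a sample size $N$ and a loss $\ell(r,x,y^w,y^l,\pi_t)\in\mathbb{R}$. Initialize $\pi_0=\hat{\pi}_0=\pi_{\mathrm{ref}}$. For $t=0,1,\dots,T$: collect a dataset $\mathcal{D}_t$ of $N$ triples $(x,y^w,y^l)$ with $x\sim\rho$, two responses drawn from $\pi_t(\cdot|x)$, and $y^w,y^l$ the preferred and dispreferred of the two; for $\pi\in\Pi$ set $r_\pi(x,y)=\beta\log\frac{\pi(y|x)}{\pi_t(y|x)}$; set $\hat{\pi}_{t+1}\in\arg\min_{\pi\in\Pi}\frac1N\sum_{(x,y^w,y^l)\in\mathcal{D}_t}\ell(r_\pi,x,y^w,y^l,\pi_t)$; then set $\pi_{t+1}(y|x)=\frac{1}{Z'_t(x)}\hat{\pi}_{t+1}(y|x)\big(\hat{\pi}_{t+1}(y|x)/\hat{\pi}_{t}(y|x)\big)^{\alpha}$ with $Z'_t(x)$ the normalizing constant. The output is $\hat{\pi}_{T+1}$. *)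

theory Defs
  imports Complex_Main
begin

text \<open>Prompts 'x and responses 'y are finite types. A policy is represented by its
  conditional probability table pi x y = pi(y|x).\<close>

type_synonym ('x, 'y) policy = "'x \<Rightarrow> 'y \<Rightarrow> real"

definition is_policy :: "('x::finite, 'y::finite) policy \<Rightarrow> bool" where
  "is_policy p \<longleftrightarrow> (\<forall>x. (\<forall>y. 0 \<le> p x y) \<and> (\<Sum>y\<in>UNIV. p x y) = 1)"

definition full_support :: "('x::finite, 'y::finite) policy \<Rightarrow> bool" where
  "full_support p \<longleftrightarrow> is_policy p \<and> (\<forall>x y. 0 < p x y)"

definition reparam_reward :: "real \<Rightarrow> ('x, 'y) policy \<Rightarrow> ('x, 'y) policy \<Rightarrow> 'x \<Rightarrow> 'y \<Rightarrow> real" where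
  "reparam_reward \<beta> p pt x y = \<beta> * ln (p x y / pt x y)"

definition emp_loss ::
  "((('x, 'y) policy) \<Rightarrow> 'x \<Rightarrow> 'y \<Rightarrow> 'y \<Rightarrow> ('x, 'y) policy \<Rightarrow> real)
   \<Rightarrow> real \<Rightarrow> ('x, 'y) policy \<Rightarrow> ('x \<times> 'y \<times> 'y) list \<Rightarrow> ('x, 'y) policy \<Rightarrow> real" where
  "emp_loss l \<beta> pt D p =
     (\<Sum>(x, yw, yl)\<leftarrow>D. l (reparam_reward \<beta> p pt) x yw yl pt) / real (length D)"

definition extrapolate :: "real \<Rightarrow> ('x, 'y::finite) policy \<Rightarrow> ('x, 'y) policy \<Rightarrow> ('x, 'y) policy" where
  "extrapolate \<alpha> pnew pold x y =
     pnew x y * (pnew x y / pold x y) powr \<alpha> /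
     (\<Sum>y'\<in>UNIV. pnew x y' * (pnew x y' / pold x y') powr \<alpha>)"

definition APO_run ::
  "('x::finite, 'y::finite) policy set \<Rightarrow> ('x, 'y) policy \<Rightarrow> real \<Rightarrow> real \<Rightarrow> nat \<Rightarrow> nat
   \<Rightarrow> ((('x, 'y) policy) \<Rightarrow> 'x \<Rightarrow> 'y \<Rightarrow> 'y \<Rightarrow> ('x, 'y) policy \<Rightarrow> real)
   \<Rightarrow> (nat \<Rightarrow> ('x \<times> 'y \<times> 'y) list)
   \<Rightarrow> (nat \<Rightarrow> ('x, 'y) policy) \<Rightarrow> (nat \<Rightarrow> ('x, 'y) policy) \<Rightarrow> bool" where
  "APO_run \<Pi> pref \<beta> \<alpha> T N l D pol pihat \<longleftrightarrow>
     pol 0 = pref \<and> pihat 0 = pref \<and>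
     (\<forall>t\<le>T.
        length (D t) = N \<and>
        pihat (Suc t) \<in> \<Pi> \<and>
        (\<forall>p\<in>\<Pi>. emp_loss l \<beta> (pol t) (D t) (pihat (Suc t)) \<le> emp_loss l \<beta> (pol t) (D t) p) \<and>
        pol (Suc t) = extrapolate \<alpha> (pihat (Suc t)) (pihat t))"

end

theory Submission
  imports Defs
begin

lemma E_step: "(\<Sum>j\<in>{0..Suc t}. (\<alpha>::real)^(Suc t-j) * d j) = d (Suc t) + \<alpha> * (\<Sum>j\<in>{0..t}. \<alpha>^(t-j) * d j)"
proof -
  have "(\<Sum>j\<in>{0..t}. \<alpha>^(Suc t-j) * d j) = \<alpha> * (\<Sum>j\<in>{0..t}. \<alpha>^(t-j) * d j)"
    by (simp add: sum_distrib_left Suc_diff_le mult.assoc)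
  then show ?thesis by simp
qed
lemma A_step: assumes "(\<alpha>::real) \<noteq> 1"
  shows "(\<Sum>j\<in>{0..Suc t}. (1/(1-\<alpha>) - \<alpha>^(Suc t+1-j)/(1-\<alpha>)) * d j) =
   (\<Sum>j\<in>{0..t}. (1/(1-\<alpha>) - \<alpha>^(t+1-j)/(1-\<alpha>)) * d j) + (\<Sum>j\<in>{0..Suc t}. \<alpha>^(Suc t-j) * d j)"
proof -
  have ne: "1 - \<alpha> \<noteq> 0" using assms by simp
  have "(\<Sum>j\<in>{0..t}. (1/(1-\<alpha>) - \<alpha>^(Suc t+1-j)/(1-\<alpha>)) * d j) =
     (\<Sum>j\<in>{0..t}. (1/(1-\<alpha>) - \<alpha>^(t+1-j)/(1-\<alpha>)) * d j + \<alpha>^(Suc t-j) * d j)"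
  proof (rule sum.cong)
    fix j assume "j \<in> {0..t}"
    then have j: "j \<le> t" by simp
    have e1: "Suc t + 1 - j = Suc (Suc (t - j))" "t + 1 - j = Suc (t-j)" "Suc t - j = Suc (t-j)" using j by auto
    show "(1/(1-\<alpha>) - \<alpha>^(Suc t+1-j)/(1-\<alpha>)) * d j = (1/(1-\<alpha>) - \<alpha>^(t+1-j)/(1-\<alpha>)) * d j + \<alpha>^(Suc t-j) * d j"
      unfolding e1 using ne by (simp add: field_simps)
  qed simp
  moreover have "(1/(1-\<alpha>) - \<alpha>^(Suc t+1-Suc t)/(1-\<alpha>)) = 1" using ne by (simp add: field_simps)
  ultimately show ?thesis by (simp add: sum.distrib)
qed

theorem theorem1:
  fixes \<Pi> :: "('x::finite, 'y::finite) policy set"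
    and pref :: "('x, 'y) policy"
    and \<beta> \<alpha> :: real and T N :: nat
    and l :: "(('x, 'y) policy) \<Rightarrow> 'x \<Rightarrow> 'y \<Rightarrow> 'y \<Rightarrow> ('x, 'y) policy \<Rightarrow> real"
    and D :: "nat \<Rightarrow> ('x \<times> 'y \<times> 'y) list"
    and pol pihat :: "nat \<Rightarrow> ('x, 'y) policy"
  assumes full: "\<forall>p\<in>\<Pi>. full_support p"
    and ref: "pref \<in> \<Pi>"
    and beta: "\<beta> > 0"
    and alpha: "\<alpha> > 0" "\<alpha> \<noteq> 1"
    and N: "N > 0"
    and run: "APO_run \<Pi> pref \<beta> \<alpha> T N l D pol pihat"
    and closed: "\<forall>t\<le>T. pol (Suc t) \<in> \<Pi>"
  shows "\<forall>t\<le>T. \<forall>x y.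
     pihat (Suc t) x y =
       pref x y * exp ((1 / \<beta>) * (\<Sum>i\<in>{0..t}.
           (1 / (1 - \<alpha>) - \<alpha> ^ (t + 1 - i) / (1 - \<alpha>)) *
           (\<beta> * ln (pihat (Suc i) x y) - \<beta> * ln (pol i x y))))
       / (\<Sum>y'\<in>UNIV. pref x y' * exp ((\<Sum>i\<in>{0..t}.
           (1 / (1 - \<alpha>) - \<alpha> ^ (t + 1 - i) / (1 - \<alpha>)) *
           (\<beta> * ln (pihat (Suc i) x y') - \<beta> * ln (pol i x y'))) / \<beta>))"
proof -
  from run have p0: "pol 0 = pref" "pihat 0 = pref"
    and step: "\<And>t. t \<le> T \<Longrightarrow> pihat (Suc t) \<in> \<Pi> \<and> pol (Suc t) = extrapolate \<alpha> (pihat (Suc t)) (pihat t)"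
    unfolding APO_run_def by auto
  have hatPi: "pihat i \<in> \<Pi>" if "i \<le> Suc T" for i
    using that p0 ref step by (cases i) auto
  have polPi: "pol i \<in> \<Pi>" if "i \<le> Suc T" for i
    using that p0 ref closed by (cases i) auto
  have fs: "0 < p x y" if "p \<in> \<Pi>" for p x y
    using full that by (auto simp: full_support_def)
  have sum1: "(\<Sum>y\<in>UNIV. p x y) = 1" if "p \<in> \<Pi>" for p x
    using full that by (auto simp: full_support_def is_policy_def)
  show ?thesis
  proof (intro allI impI)
    fix t x y assume tT: "t \<le> T"
    define d where "d j y = ln (pihat (Suc j) x y) - ln (pol j x y)" for j y
    define E where "E s y = (\<Sum>j\<in>{0..s}. \<alpha>^(s-j) * d j y)" for s y
    define A where "A s y = (\<Sum>j\<in>{0..s}. (1/(1-\<alpha>) - \<alpha>^(s+1-j)/(1-\<alpha>)) * d j y)" for s y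
    define L where "L i y = ln (pihat i x y)" for i y
    have polstep: "\<exists>c. \<forall>y. ln (pol (Suc s) x y) = (1+\<alpha>) * L (Suc s) y - \<alpha> * L s y - c"
      if sT: "s \<le> T" for s
    proof -
      define Z where "Z = (\<Sum>y'\<in>UNIV. pihat (Suc s) x y' * (pihat (Suc s) x y' / pihat s x y') powr \<alpha>)"
      have a: "0 < pihat (Suc s) x y" for y using fs hatPi sT by simp
      have b: "0 < pihat s x y" for y using fs hatPi sT by simp
      have tp: "0 < pihat (Suc s) x y' * (pihat (Suc s) x y' / pihat s x y') powr \<alpha>" for y'
      proof -
        have "pihat (Suc s) x y' / pihat s x y' \<noteq> 0" using a[of y'] b[of y'] by simp
        then show ?thesis using a[of y'] by simp
      qed
      have Zpos: "Z > 0" unfolding Z_def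
        by (rule sum_pos) (auto simp: tp)
      have "ln (pol (Suc s) x y) = (1+\<alpha>) * L (Suc s) y - \<alpha> * L s y - ln Z" for y
      proof -
        have "pol (Suc s) x y = pihat (Suc s) x y * (pihat (Suc s) x y / pihat s x y) powr \<alpha> / Z"
          using step[OF sT] by (simp add: extrapolate_def Z_def)
        then have "ln (pol (Suc s) x y) = ln (pihat (Suc s) x y) + \<alpha> * (ln (pihat (Suc s) x y) - ln (pihat s x y)) - ln Z"
          using a[of y] b[of y] Zpos by (simp add: ln_mult ln_div ln_powr)
        then show ?thesis unfolding L_def by (simp add: algebra_simps)
      qed
      then show ?thesis by blast
    qed
    have key: "\<exists>K1 K2. \<forall>y. L (Suc s) y - L s y = E s y + K1 \<and> L (Suc s) y - L 0 y = A s y + K2"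
      if "s \<le> T" for s
      using that
    proof (induction s)
      case 0
      have "L (Suc 0) y - L 0 y = E 0 y + 0 \<and> L (Suc 0) y - L 0 y = A 0 y + 0" for y
      proof -
        have ne: "1 - \<alpha> \<noteq> 0" using alpha by simp
        have "(1/(1-\<alpha>) - \<alpha>/(1-\<alpha>)) = 1" using ne by (simp add: field_simps)
        then show ?thesis unfolding E_def A_def d_def L_def using p0 by simp
      qed
      then show ?case by blast
    next
      case (Suc s)
      then obtain K1 K2 where IH: "\<forall>y. L (Suc s) y - L s y = E s y + K1 \<and> L (Suc s) y - L 0 y = A s y + K2"
        by auto
      obtain c where c: "\<forall>y. ln (pol (Suc s) x y) = (1+\<alpha>) * L (Suc s) y - \<alpha> * L s y - c"
        using polstep Suc.prems by force
      have "L (Suc (Suc s)) y - L (Suc s) y = E (Suc s) y + (\<alpha> * K1 - c) \<and>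
            L (Suc (Suc s)) y - L 0 y = A (Suc s) y + (\<alpha> * K1 - c + K2)" for y
      proof -
        have e1: "E (Suc s) y = d (Suc s) y + \<alpha> * E s y" unfolding E_def by (rule E_step)
        have e2: "A (Suc s) y = A s y + E (Suc s) y" unfolding A_def E_def
          using A_step[OF alpha(2)] by simp
        have dd: "d (Suc s) y = L (Suc (Suc s)) y - ln (pol (Suc s) x y)" unfolding d_def L_def by simp
        have 1: "L (Suc (Suc s)) y - L (Suc s) y = E (Suc s) y + (\<alpha> * K1 - c)"
          using IH[rule_format, of y] c[rule_format, of y] e1 dd by (simp add: algebra_simps)
        show ?thesis using 1 e2 IH[rule_format, of y] by simp
      qed
      then show ?case by blast
    qed
    obtain K where K: "\<forall>y. L (Suc t) y - L 0 y = A t y + K" using key[OF tT] by blast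
    have hpos: "0 < pihat (Suc t) x y" for y using fs hatPi tT by simp
    have rpos: "0 < pref x y" for y using fs ref by simp
    have eq: "pihat (Suc t) x y = pref x y * exp (A t y) * exp K" for y
    proof -
      have "ln (pihat (Suc t) x y) = ln (pref x y) + A t y + K"
        using K[rule_format, of y] p0 unfolding L_def by simp
      then have "exp (ln (pihat (Suc t) x y)) = exp (ln (pref x y) + A t y + K)" by simp
      then show ?thesis using hpos[of y] rpos[of y] by (simp add: exp_add)
    qed
    have "1 = (\<Sum>y\<in>UNIV. pihat (Suc t) x y)" using sum1 hatPi tT by simp
    also have "\<dots> = exp K * (\<Sum>y\<in>UNIV. pref x y * exp (A t y))"
      by (simp add: eq sum_distrib_left mult.commute mult.left_commute)
    finally have eK: "exp K = 1 / (\<Sum>y\<in>UNIV. pref x y * exp (A t y))"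
      by (metis mult_cancel_left2 nonzero_eq_divide_eq zero_neq_one mult.commute)
    have ex1: "(1 / \<beta>) * (\<Sum>i\<in>{0..t}. (1 / (1 - \<alpha>) - \<alpha> ^ (t + 1 - i) / (1 - \<alpha>)) *
           (\<beta> * ln (pihat (Suc i) x y') - \<beta> * ln (pol i x y'))) = A t y'" for y'
    proof -
      have "(\<Sum>i\<in>{0..t}. (1 / (1 - \<alpha>) - \<alpha> ^ (t + 1 - i) / (1 - \<alpha>)) *
           (\<beta> * ln (pihat (Suc i) x y') - \<beta> * ln (pol i x y'))) = \<beta> * A t y'"
        unfolding A_def d_def
        by (subst sum_distrib_left) (rule sum.cong, simp_all add: algebra_simps)
      then show ?thesis using beta by simp
    qed
    have ex2: "(\<Sum>i\<in>{0..t}. (1 / (1 - \<alpha>) - \<alpha> ^ (t + 1 - i) / (1 - \<alpha>)) *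
           (\<beta> * ln (pihat (Suc i) x y') - \<beta> * ln (pol i x y'))) / \<beta> = A t y'" for y'
      using ex1[of y'] by simp
    show "pihat (Suc t) x y =
       pref x y * exp ((1 / \<beta>) * (\<Sum>i\<in>{0..t}.
           (1 / (1 - \<alpha>) - \<alpha> ^ (t + 1 - i) / (1 - \<alpha>)) *
           (\<beta> * ln (pihat (Suc i) x y) - \<beta> * ln (pol i x y))))
       / (\<Sum>y'\<in>UNIV. pref x y' * exp ((\<Sum>i\<in>{0..t}.
           (1 / (1 - \<alpha>) - \<alpha> ^ (t + 1 - i) / (1 - \<alpha>)) *
           (\<beta> * ln (pihat (Suc i) x y') - \<beta> * ln (pol i x y'))) / \<beta>))"
      unfolding ex1 ex2 eq[of y] eK by simp
  qed
qed

end
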